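(* For every integer $n \geq 2$, $D_n = (n-1)\left[D_{n-1} + D_{n-2}\right] + (-1)^{n-1}$, with the convention $D_0 = 0$.
   Context: A linear arrangement of $\{1,\ldots,n\}$ is a sequence $a_1\cdots a_n$ in which each of $1,\ldots,n$ appears exactly once. It contains the pattern $ij$ if $a_t=i$ and $a_{t+1}=j$ for some $t$; otherwise it avoids it. $D_n$ is the number of linear arrangements of $\{1,\ldots,n\}$ avoiding all of the patterns $12, 23, \ldots, (n-1)n, n1$; $D_0=0$. *)

theory Defs
  imports Main
begin

definition arrangements :: "nat \<Rightarrow> nat list set" where
  "arrangements n = {xs. distinct xs \<and> set xs = {1..n}}"

definition contains_pattern :: "nat list \<Rightarrow> nat \<Rightarrow> nat \<Rightarrow> bool" where
  "contains_pattern xs i j \<longleftrightarrow> (\<exists>t. Suc t < length xs \<and> xs ! t = i \<and> xs ! Suc t = j)"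

definition forbidden_patterns :: "nat \<Rightarrow> (nat \<times> nat) set" where
  "forbidden_patterns n = {(i, i + 1) | i. 1 \<le> i \<and> i < n} \<union> {(n, 1)}"

definition D :: "nat \<Rightarrow> nat" where
  "D n = (if n = 0 then 0 else
     card {xs \<in> arrangements n. \<forall>(i, j) \<in> forbidden_patterns n. \<not> contains_pattern xs i j})"

end

theory Submission
  imports Defs
begin


definition sc :: "nat \<Rightarrow> nat \<Rightarrow> nat" where "sc n x = (if x = n then 1 else x + 1)"

fun Bf :: "(nat \<Rightarrow> nat) \<Rightarrow> nat list \<Rightarrow> nat set" where
  "Bf f (x # y # zs) = (if y = f x then insert x (Bf f (y # zs)) else Bf f (y # zs))"
| "Bf f _ = {}"

lemma Bf_Cons: "Bf f (x # xs) = Bf f xs \<union> (if xs \<noteq> [] \<and> hd xs = f x then {x} else {})"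
  by (cases xs) auto

lemma Bf_append: "Bf f (as @ bs) = Bf f as \<union> Bf f bs \<union>
   (if as \<noteq> [] \<and> bs \<noteq> [] \<and> hd bs = f (last as) then {last as} else {})"
  by (induction as) (auto simp: Bf_Cons)

lemma ex_nat_split: "(\<exists>t. P t) \<longleftrightarrow> P 0 \<or> (\<exists>t. P (Suc t))"
  by (metis not0_implies_Suc)

lemma Bf_nth: "x \<in> Bf f xs \<longleftrightarrow> (\<exists>t. Suc t < length xs \<and> xs ! t = x \<and> xs ! Suc t = f x)"
proof (induction xs)
  case Nil
  then show ?case by simp
next
  case (Cons a xs)
  have "(\<exists>t. Suc t < length (a # xs) \<and> (a # xs) ! t = x \<and> (a # xs) ! Suc t = f x) \<longleftrightarrow>
     (0 < length xs \<and> a = x \<and> xs ! 0 = f x) \<or> (\<exists>t. Suc t < length xs \<and> xs ! t = x \<and> xs ! Suc t = f x)"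
    by (subst ex_nat_split) simp
  moreover have "(0 < length xs \<and> a = x \<and> xs ! 0 = f x) \<longleftrightarrow> x \<in> (if xs \<noteq> [] \<and> hd xs = f a then {a} else {})"
    by (cases xs) auto
  ultimately show ?case using Cons by (simp only: Bf_Cons Un_iff disj_commute)
qed

lemma Bf_sub_tl: "Bf f xs \<subseteq> set (butlast xs)"
proof
  fix x assume "x \<in> Bf f xs"
  then obtain t where "Suc t < length xs" "xs ! t = x" by (auto simp: Bf_nth)
  then show "x \<in> set (butlast xs)"
    by (metis Suc_lessD diff_Suc_1 in_set_conv_nth length_butlast less_diff_conv nth_butlast Suc_eq_plus1)
qed

lemma Bf_sub: "Bf f xs \<subseteq> set xs"
proof
  fix x assume "x \<in> Bf f xs"
  then have "x \<in> set (butlast xs)" using Bf_sub_tl[of f xs] by (rule subsetD[rotated])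
  then show "x \<in> set xs" by (rule in_set_butlastD)
qed

lemma Bf_cong: assumes "\<forall>x\<in>set xs. f x = h x \<or> (f x \<notin> set (tl xs) \<and> h x \<notin> set (tl xs))"
  shows "Bf f xs = Bf h xs"
proof -
  have tl: "xs ! Suc t \<in> set (tl xs)" if "Suc t < length xs" for t
    using that by (metis Suc_less_eq2 diff_Suc_1 length_tl nth_mem nth_tl)
  have eq: "(Suc t < length xs \<and> xs ! t = x \<and> xs ! Suc t = f x) \<longleftrightarrow>
     (Suc t < length xs \<and> xs ! t = x \<and> xs ! Suc t = h x)" for t x
  proof (cases "Suc t < length xs \<and> xs ! t = x")
    case True
    then have x: "x \<in> set xs" by auto
    have m: "xs ! Suc t \<in> set (tl xs)" using tl True by blast
    have "f x = h x \<or> (f x \<notin> set (tl xs) \<and> h x \<notin> set (tl xs))"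
      using assms x by blast
    then show ?thesis
    proof
      assume "f x = h x" then show ?thesis by simp
    next
      assume "f x \<notin> set (tl xs) \<and> h x \<notin> set (tl xs)"
      then have "xs ! Suc t \<noteq> f x" "xs ! Suc t \<noteq> h x" using m by auto
      then show ?thesis by simp
    qed
  next
    case False
    then show ?thesis by blast
  qed
  show ?thesis unfolding set_eq_iff Bf_nth by (intro allI ex_cong1) (rule eq)
qed

lemma Bf_map: assumes "\<forall>x\<in>set ys. \<forall>y\<in>set ys. (g y = f (g x)) = (y = f x)"
  shows "Bf f (map g ys) = g ` Bf f ys"
  using assms
proof (induction ys)
  case Nil then show ?case by simp
next
  case (Cons a ys)
  have IH: "Bf f (map g ys) = g ` Bf f ys" using Cons by simp
  have h: "(map g ys \<noteq> [] \<and> hd (map g ys) = f (g a)) = (ys \<noteq> [] \<and> hd ys = f a)"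
    using Cons.prems by (cases ys) auto
  have "Bf f (map g (a # ys)) = Bf f (map g ys) \<union> (if map g ys \<noteq> [] \<and> hd (map g ys) = f (g a) then {g a} else {})"
    by (simp only: list.map Bf_Cons)
  also have "\<dots> = g ` Bf f ys \<union> g ` (if ys \<noteq> [] \<and> hd ys = f a then {a} else {})"
    by (simp only: IH h) simp
  also have "\<dots> = g ` Bf f (a # ys)" by (simp only: Bf_Cons image_Un)
  finally show ?case .
qed




lemma sc_range: "1 \<le> x \<Longrightarrow> x \<le> n \<Longrightarrow> sc n x \<in> {1..n}"
  by (auto simp: sc_def)

lemma sc_eq1: "1 \<le> x \<Longrightarrow> x \<le> n \<Longrightarrow> sc n x = 1 \<longleftrightarrow> x = n"
  by (auto simp: sc_def)

lemma sc_inj: "x \<in> {1..n} \<Longrightarrow> y \<in> {1..n} \<Longrightarrow> sc n x = sc n y \<longleftrightarrow> x = y"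
  by (auto simp: sc_def)

lemma arr_len: "xs \<in> arrangements n \<Longrightarrow> length xs = n"
  unfolding arrangements_def using distinct_card by fastforce

lemma finite_arr: "finite (arrangements n)"
proof -
  have "arrangements n \<subseteq> {xs. set xs \<subseteq> {1..n} \<and> length xs = n}"
    using arr_len by (auto simp: arrangements_def)
  then show ?thesis using finite_lists_length_eq[of "{1..n}" n] finite_subset by blast
qed

lemma Bf_shrink: assumes "set L \<subseteq> {1..m}"
  shows "Bf (sc (Suc m)) L = Bf (sc m) L - {m}"
proof -
  have eq: "(Suc t < length L \<and> L ! t = x \<and> L ! Suc t = sc (Suc m) x) \<longleftrightarrow>
        (Suc t < length L \<and> L ! t = x \<and> L ! Suc t = sc m x) \<and> x \<noteq> m" for t x
  proof (cases "Suc t < length L \<and> L ! t = x")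
    case True
    then have "x \<in> {1..m}" "L ! Suc t \<in> {1..m}" using assms nth_mem
      by (metis Suc_lessD subsetD) (use True assms nth_mem in blast)
    then show ?thesis using True by (auto simp: sc_def)
  next
    case False
    then show ?thesis by blast
  qed
  show ?thesis
  proof (rule set_eqI)
    fix x
    have "x \<in> Bf (sc (Suc m)) L \<longleftrightarrow> (\<exists>t. Suc t < length L \<and> L ! t = x \<and> L ! Suc t = sc (Suc m) x)"
      by (rule Bf_nth)
    also have "\<dots> \<longleftrightarrow> (\<exists>t. Suc t < length L \<and> L ! t = x \<and> L ! Suc t = sc m x) \<and> x \<noteq> m"
      by (simp only: eq) blast
    also have "\<dots> \<longleftrightarrow> x \<in> Bf (sc m) L - {m}" by (simp only: Bf_nth Diff_iff singleton_iff)
    finally show "x \<in> Bf (sc (Suc m)) L \<longleftrightarrow> x \<in> Bf (sc m) L - {m}" .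
  qed
qed

lemma Bf_no_last: assumes "a \<notin> set (tl L)" shows "z \<in> Bf f L \<Longrightarrow> f z \<noteq> a"
proof -
  assume "z \<in> Bf f L"
  then obtain t where t: "Suc t < length L" "L ! Suc t = f z" by (auto simp: Bf_nth)
  then have "L ! Suc t \<in> set (tl L)" by (metis Suc_less_eq2 diff_Suc_1 length_tl nth_mem nth_tl)
  then show "f z \<noteq> a" using t assms by auto
qed

lemma con_core:
  assumes km: "km \<ge> 1" and d: "distinct (as @ 1 # cs)" and s: "set (as @ 1 # cs) = {1..km}"
  shows "Bf (sc (Suc km)) (as @ Suc km # 1 # cs) = insert (Suc km) (Bf (sc km) (as @ 1 # cs))"
proof -
  define k where "k = Suc km"
  have as1: "1 \<notin> set as" using d by auto
  have asr: "set as \<subseteq> {1..km}" using s by auto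
  have csr: "set (1 # cs) \<subseteq> {1..km}" using s by auto
  have cs1: "1 \<notin> set cs" using d by auto
  have A: "Bf (sc k) as = Bf (sc km) as"
  proof -
    have "Bf (sc k) as = Bf (sc km) as - {km}" unfolding k_def by (rule Bf_shrink[OF asr])
    moreover have "km \<notin> Bf (sc km) as"
    proof
      assume "km \<in> Bf (sc km) as"
      moreover have "1 \<notin> set (tl as)" using as1 by (cases as) auto
      ultimately have "sc km km \<noteq> 1" using Bf_no_last by blast
      then show False by (simp add: sc_def)
    qed
    ultimately show ?thesis by blast
  qed
  have C: "Bf (sc k) (1 # cs) = Bf (sc km) (1 # cs)"
  proof -
    have "Bf (sc k) (1#cs) = Bf (sc km) (1#cs) - {km}" unfolding k_def by (rule Bf_shrink[OF csr])
    moreover have "km \<notin> Bf (sc km) (1#cs)"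
    proof
      assume "km \<in> Bf (sc km) (1#cs)"
      moreover have "1 \<notin> set (tl (1#cs))" using cs1 by simp
      ultimately have "sc km km \<noteq> 1" using Bf_no_last by blast
      then show False by (simp add: sc_def)
    qed
    ultimately show ?thesis by blast
  qed
  have B: "Bf (sc k) (k # 1 # cs) = insert k (Bf (sc k) (1 # cs))"
    by (simp add: Bf_Cons sc_def)
  have J: "(as \<noteq> [] \<and> k = sc k (last as)) \<longleftrightarrow> (as \<noteq> [] \<and> 1 = sc km (last as))"
  proof (cases "as = []")
    case False
    then have "last as \<in> {1..km}" using asr last_in_set by blast
    then show ?thesis unfolding k_def sc_def by auto
  qed simp
  have "Bf (sc k) (as @ k # 1 # cs) = Bf (sc k) as \<union> Bf (sc k) (k # 1 # cs) \<union>
     (if as \<noteq> [] \<and> k = sc k (last as) then {last as} else {})"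
    by (simp add: Bf_append)
  also have "\<dots> = insert k (Bf (sc km) as \<union> Bf (sc km) (1 # cs) \<union>
     (if as \<noteq> [] \<and> 1 = sc km (last as) then {last as} else {}))"
    unfolding A B C J by auto
  also have "\<dots> = insert k (Bf (sc km) (as @ 1 # cs))"
    by (simp add: Bf_append)
  finally show ?thesis unfolding k_def .
qed

fun insb :: "nat \<Rightarrow> nat \<Rightarrow> nat list \<Rightarrow> nat list" where
  "insb k a [] = []"
| "insb k a (x # xs) = (if x = a then k # x # xs else x # insb k a xs)"

lemma insb_app: "a \<notin> set as \<Longrightarrow> insb k a (as @ a # cs) = as @ k # a # cs"
  by (induction as) auto

lemma split2: assumes "Suc t < length ys"
  shows "ys = take t ys @ ys ! t # ys ! Suc t # drop (Suc (Suc t)) ys"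
  using assms by (metis Cons_nth_drop_Suc Suc_lessD append_take_drop_id)




lemma decomp_k:
  assumes ys: "ys \<in> arrangements k" and k: "k \<ge> 2" and b: "k \<in> Bf (sc k) ys"
  shows "\<exists>as cs. ys = as @ k # 1 # cs"
proof -
  obtain t where t: "Suc t < length ys" "ys ! t = k" "ys ! Suc t = sc k k" using b by (auto simp: Bf_nth)
  have "sc k k = 1" by (simp add: sc_def)
  then have "ys = take t ys @ k # 1 # drop (Suc (Suc t)) ys" using split2[OF t(1)] t by simp
  then show ?thesis by blast
qed

lemma dist_facts: "distinct (as @ k # (1::nat) # cs) \<Longrightarrow> k \<notin> set as \<and> 1 \<notin> set as \<and> distinct (as @ 1 # cs) \<and> k \<notin> set (as @ 1 # cs)"
  by auto

lemma con:
  assumes k: "k \<ge> 2"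
  shows "card {ys \<in> arrangements k. k \<in> Bf (sc k) ys \<and> Q (Bf (sc k) ys - {k})}
       = card {zs \<in> arrangements (k - 1). Q (Bf (sc (k - 1)) zs)}"
proof -
  obtain km where kk: "k = Suc km" and km: "km \<ge> 1" using k by (cases k) auto
  let ?A = "{ys \<in> arrangements k. k \<in> Bf (sc k) ys \<and> Q (Bf (sc k) ys - {k})}"
  let ?B = "{zs \<in> arrangements (k - 1). Q (Bf (sc (k - 1)) zs)}"
  have fw: "remove1 k ys \<in> ?B \<and> insb k 1 (remove1 k ys) = ys" if "ys \<in> ?A" for ys
  proof -
    have ys: "ys \<in> arrangements k" "k \<in> Bf (sc k) ys" "Q (Bf (sc k) ys - {k})" using that by auto
    obtain as cs where e: "ys = as @ k # 1 # cs" using decomp_k[OF ys(1) k ys(2)] by blast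
    have dy: "distinct ys" and sy: "set ys = {1..k}" using ys(1) by (auto simp: arrangements_def)
    have df: "distinct (as @ k # 1 # cs)" using dy e by simp
    have kas: "k \<notin> set as" and onas: "1 \<notin> set as" and dz: "distinct (as @ 1 # cs)"
      and kz: "k \<notin> set (as @ 1 # cs)" using dist_facts[OF df] by auto
    have r: "remove1 k ys = as @ 1 # cs" unfolding e using kas by (simp add: remove1_append)
    have sz: "set (as @ 1 # cs) = {1..km}"
    proof -
      have "set (as @ 1 # cs) = set (as @ k # 1 # cs) - {k}" using kz by auto
      also have "\<dots> = set ys - {k}" using e by simp
      also have "\<dots> = {1..km}" using sy kk by (simp add: atLeastAtMostSuc_conv)
      finally show ?thesis .
    qed
    have cc: "Bf (sc k) ys = insert k (Bf (sc km) (as @ 1 # cs))"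
      using con_core[OF km dz sz] e kk by simp
    have kn: "k \<notin> Bf (sc km) (as @ 1 # cs)" using Bf_sub kz by blast
    have "Bf (sc k) ys - {k} = Bf (sc km) (as @ 1 # cs)" using cc kn by auto
    then have "Q (Bf (sc (k - 1)) (as @ 1 # cs))" using ys(3) kk by simp
    moreover have "as @ 1 # cs \<in> arrangements (k - 1)" using dz sz kk by (simp add: arrangements_def)
    moreover have "insb k 1 (as @ 1 # cs) = ys" using insb_app[OF onas] e by simp
    ultimately show ?thesis using r by simp
  qed
  have bw: "insb k 1 zs \<in> ?A \<and> remove1 k (insb k 1 zs) = zs" if "zs \<in> ?B" for zs
  proof -
    have zs: "zs \<in> arrangements km" "Q (Bf (sc km) zs)" using that kk by auto
    have dz: "distinct zs" and sz: "set zs = {1..km}" using zs(1) by (auto simp: arrangements_def)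
    have "1 \<in> set zs" using sz km by auto
    then obtain as cs where e: "zs = as @ 1 # cs" and onas: "1 \<notin> set as" using split_list_first by metis
    have i: "insb k 1 zs = as @ k # 1 # cs" using insb_app[OF onas] e by simp
    have kz: "k \<notin> set zs" using sz kk by auto
    have cc: "Bf (sc k) (as @ k # 1 # cs) = insert k (Bf (sc km) zs)"
      using con_core[OF km] dz sz e kk by simp
    have kn: "k \<notin> Bf (sc km) zs" using Bf_sub kz by blast
    have "as @ k # 1 # cs \<in> arrangements k"
    proof -
      have "distinct (as @ k # 1 # cs)" using dz kz unfolding e by auto
      moreover have "set (as @ k # 1 # cs) = insert k (set zs)" unfolding e by auto
      moreover have "insert k {1..km} = {1..k}" using kk by (simp add: atLeastAtMostSuc_conv)
      ultimately show ?thesis using sz by (simp add: arrangements_def)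
    qed
    moreover have "remove1 k (as @ k # 1 # cs) = zs" using kz e by (simp add: remove1_append)
    ultimately show ?thesis using i cc kn zs(2) by auto
  qed
  have "bij_betw (remove1 k) ?A ?B"
  proof (rule bij_betw_byWitness[where f'="insb k 1"])
    show "\<forall>a\<in>?A. insb k 1 (remove1 k a) = a" using fw by blast
    show "\<forall>a'\<in>?B. remove1 k (insb k 1 a') = a'" using bw by blast
    show "remove1 k ` ?A \<subseteq> ?B" using fw by (intro image_subsetI) blast
    show "insb k 1 ` ?B \<subseteq> ?A" using bw by (intro image_subsetI) blast
  qed
  then show ?thesis by (rule bij_betw_same_card)
qed




definition rinv :: "nat \<Rightarrow> nat \<Rightarrow> nat" where "rinv k y = (if y = 1 then k else y - 1)"

lemma rinv_props:
  assumes "k \<ge> 1" "y \<in> {1..k}"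
  shows "rinv k y \<in> {1..k}" "sc k (rinv k y) = y"
  using assms by (auto simp: rinv_def sc_def)

lemma rinv_sc: assumes "x \<in> {1..k}" shows "rinv k (sc k x) = x"
  using assms by (auto simp: rinv_def sc_def)

lemma sc_image: assumes "k \<ge> 1" shows "sc k ` {1..k} = {1..k}"
proof
  show "sc k ` {1..k} \<subseteq> {1..k}"
  proof (rule image_subsetI)
    fix x assume "x \<in> {1..k}" then show "sc k x \<in> {1..k}" using sc_range[of x k] by simp
  qed
  show "{1..k} \<subseteq> sc k ` {1..k}"
  proof
    fix y assume y: "y \<in> {1..k}"
    then have "y = sc k (rinv k y)" "rinv k y \<in> {1..k}" using rinv_props[OF assms y] by auto
    then show "y \<in> sc k ` {1..k}" by (rule image_eqI)
  qed
qed

lemma rinv_image: assumes "k \<ge> 1" shows "rinv k ` {1..k} = {1..k}"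
proof
  show "rinv k ` {1..k} \<subseteq> {1..k}"
  proof (rule image_subsetI)
    fix x assume "x \<in> {1..k}" then show "rinv k x \<in> {1..k}" using rinv_props(1)[OF assms] by simp
  qed
  show "{1..k} \<subseteq> rinv k ` {1..k}"
  proof
    fix y assume y: "y \<in> {1..k}"
    then have "y = rinv k (sc k y)" "sc k y \<in> {1..k}" using rinv_sc[OF y] sc_range[of y k] by auto
    then show "y \<in> rinv k ` {1..k}" by (rule image_eqI)
  qed
qed

lemma sc_inj_on: "inj_on (sc k) {1..k}"
proof (rule inj_onI)
  fix x y assume "x \<in> {1..k}" "y \<in> {1..k}" "sc k x = sc k y"
  then show "x = y" using sc_inj[of x k y] by simp
qed

lemma rinv_inj_on: "inj_on (rinv k) {1..k}"
proof (rule inj_onI)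
  fix x y assume "x \<in> {1..k}" "y \<in> {1..k}" "rinv k x = rinv k y"
  then show "x = y" unfolding rinv_def by (simp split: if_splits)
qed

lemma map_arr:
  assumes k: "k \<ge> 1" and g: "inj_on g {1..k}" "g ` {1..k} = {1..k}" and ys: "ys \<in> arrangements k"
  shows "map g ys \<in> arrangements k"
proof -
  have "distinct ys" "set ys = {1..k}" using ys by (auto simp: arrangements_def)
  then show ?thesis using g by (simp add: arrangements_def distinct_map)
qed

lemma rot_card:
  assumes k: "k \<ge> 2" and u: "u \<in> {1..k}"
  shows "card {ys \<in> arrangements k. Bf (sc k) ys = {u}} = card {ys \<in> arrangements k. Bf (sc k) ys = {sc k u}}"
proof -
  have k1: "k \<ge> 1" using k by simp
  let ?A = "{ys \<in> arrangements k. Bf (sc k) ys = {u}}"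
  let ?B = "{ys \<in> arrangements k. Bf (sc k) ys = {sc k u}}"
  have bfmap: "Bf (sc k) (map (sc k) ys) = sc k ` Bf (sc k) ys" if "ys \<in> arrangements k" for ys
  proof (rule Bf_map)
    have s: "set ys = {1..k}" using that by (simp add: arrangements_def)
    show "\<forall>x\<in>set ys. \<forall>y\<in>set ys. (sc k y = sc k (sc k x)) = (y = sc k x)"
      unfolding s
    proof (intro ballI)
      fix x y assume x: "x \<in> {1..k}" and y: "y \<in> {1..k}"
      have "sc k x \<in> {1..k}" using x sc_range[of x k] by simp
      then show "(sc k y = sc k (sc k x)) = (y = sc k x)" using sc_inj[OF y] by blast
    qed
  qed
  have inj: "inj_on (map (sc k)) ?A"
  proof (rule inj_onI)
    fix xs ys assume "xs \<in> ?A" "ys \<in> ?A" "map (sc k) xs = map (sc k) ys"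
    moreover have "inj_on (sc k) (set xs \<union> set ys)" using \<open>xs \<in> ?A\<close> \<open>ys \<in> ?A\<close> sc_inj_on
      by (simp add: arrangements_def)
    ultimately show "xs = ys" using inj_on_map_eq_map by blast
  qed
  have img: "map (sc k) ` ?A = ?B"
  proof
    show "map (sc k) ` ?A \<subseteq> ?B"
    proof (rule image_subsetI)
      fix ys assume "ys \<in> ?A"
      then have ys: "ys \<in> arrangements k" "Bf (sc k) ys = {u}" by auto
      have "map (sc k) ys \<in> arrangements k" using map_arr[OF k1 sc_inj_on sc_image[OF k1] ys(1)] .
      moreover have "Bf (sc k) (map (sc k) ys) = {sc k u}" using bfmap[OF ys(1)] ys(2) by simp
      ultimately show "map (sc k) ys \<in> ?B" by simp
    qed
    show "?B \<subseteq> map (sc k) ` ?A"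
    proof
      fix zs assume zs: "zs \<in> ?B"
      have sz: "set zs = {1..k}" using zs by (simp add: arrangements_def)
      define ys where "ys = map (rinv k) zs"
      have ys: "ys \<in> arrangements k" unfolding ys_def
        using map_arr[OF k1 rinv_inj_on rinv_image[OF k1]] zs by simp
      have sy: "set ys = {1..k}" using ys by (simp add: arrangements_def)
      have e: "map (sc k) ys = zs" unfolding ys_def map_map
      proof (rule map_idI)
        fix x assume "x \<in> set zs"
        then have "x \<in> {1..k}" using sz by simp
        then show "(sc k \<circ> rinv k) x = x" using rinv_props(2)[OF k1] by simp
      qed
      have "sc k ` Bf (sc k) ys = {sc k u}" using bfmap[OF ys] e zs by simp
      moreover have "Bf (sc k) ys \<subseteq> {1..k}" using Bf_sub sy by blast
      moreover have "{sc k u} = sc k ` {u}" by simp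
      moreover have "{u} \<subseteq> {1..k}" using u by simp
      ultimately have "Bf (sc k) ys = {u}" using inj_on_image_eq_iff[OF sc_inj_on] by metis
      then have "ys \<in> ?A" using ys by simp
      then show "zs \<in> map (sc k) ` ?A" using e by (metis image_eqI)
    qed
  qed
  show ?thesis using card_image[OF inj] img by simp
qed

definition G :: "nat \<Rightarrow> nat" where "G m = card {zs \<in> arrangements m. Bf (sc m) zs = {}}"

lemma cardAk: assumes k: "k \<ge> 2"
  shows "card {ys \<in> arrangements k. Bf (sc k) ys = {k}} = G (k - 1)"
proof -
  have "{ys \<in> arrangements k. Bf (sc k) ys = {k}} = {ys \<in> arrangements k. k \<in> Bf (sc k) ys \<and> (Bf (sc k) ys - {k}) = {}}"
    by blast
  then show ?thesis using con[OF k, of "\<lambda>S. S = {}"] by (simp add: G_def)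
qed

lemma cardAu: assumes k: "k \<ge> 2" and u: "u \<in> {1..k}"
  shows "card {ys \<in> arrangements k. Bf (sc k) ys = {u}} = G (k - 1)"
proof -
  have "u \<le> k" "1 \<le> u" using u by auto
  then have "card {ys \<in> arrangements k. Bf (sc k) ys = {u}} = card {ys \<in> arrangements k. Bf (sc k) ys = {k}}"
  proof (induction u rule: inc_induct)
    case base then show ?case by simp
  next
    case (step n)
    have "n \<in> {1..k}" using step by simp
    moreover have "sc k n = Suc n" using step by (simp add: sc_def)
    ultimately show ?case using rot_card[OF k, of n] step by simp
  qed
  then show ?thesis using cardAk[OF k] by simp
qed




lemma Bf_arr_sub: "ys \<in> arrangements k \<Longrightarrow> Bf f ys \<subseteq> {1..k}"
  using Bf_sub[of f ys] by (simp add: arrangements_def)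

lemma card_union_A:
  assumes k: "k \<ge> 2" and U: "U \<subseteq> {1..k}"
  shows "card {ys \<in> arrangements k. \<exists>u\<in>U. Bf (sc k) ys = {u}} = card U * G (k - 1)"
proof -
  have fU: "finite U" using U finite_subset by blast
  have e: "{ys \<in> arrangements k. \<exists>u\<in>U. Bf (sc k) ys = {u}} = (\<Union>u\<in>U. {ys \<in> arrangements k. Bf (sc k) ys = {u}})"
    by blast
  have "card (\<Union>u\<in>U. {ys \<in> arrangements k. Bf (sc k) ys = {u}}) = (\<Sum>u\<in>U. card {ys \<in> arrangements k. Bf (sc k) ys = {u}})"
  proof (rule card_UN_disjoint[OF fU])
    show "\<forall>i\<in>U. finite {ys \<in> arrangements k. Bf (sc k) ys = {i}}" using finite_arr by simp
    show "\<forall>i\<in>U. \<forall>j\<in>U. i \<noteq> j \<longrightarrow> {ys \<in> arrangements k. Bf (sc k) ys = {i}} \<inter> {ys \<in> arrangements k. Bf (sc k) ys = {j}} = {}"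
      by blast
  qed
  also have "\<dots> = (\<Sum>u\<in>U. G (k - 1))"
  proof (rule sum.cong[OF refl])
    fix u assume "u \<in> U" then have "u \<in> {1..k}" using U by blast
    then show "card {ys \<in> arrangements k. Bf (sc k) ys = {u}} = G (k - 1)" by (rule cardAu[OF k])
  qed
  finally show ?thesis using e by simp
qed

lemma card_one:
  assumes k: "k \<ge> 2"
  shows "card {ys \<in> arrangements k. card (Bf (sc k) ys) = 1} = k * G (k - 1)"
proof -
  have "{ys \<in> arrangements k. card (Bf (sc k) ys) = 1} = {ys \<in> arrangements k. \<exists>u\<in>{1..k}. Bf (sc k) ys = {u}}"
  proof (intro Collect_cong conj_cong refl)
    fix ys assume ys: "ys \<in> arrangements k"
    show "(card (Bf (sc k) ys) = 1) = (\<exists>u\<in>{1..k}. Bf (sc k) ys = {u})"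
      using Bf_arr_sub[OF ys, of "sc k"] by (auto simp: card_1_singleton_iff)
  qed
  then show ?thesis using card_union_A[OF k, of "{1..k}"] by simp
qed

lemma card_one_nk:
  assumes k: "k \<ge> 2"
  shows "card {ys \<in> arrangements k. k \<notin> Bf (sc k) ys \<and> card (Bf (sc k) ys) = 1} = (k - 1) * G (k - 1)"
proof -
  have "{ys \<in> arrangements k. k \<notin> Bf (sc k) ys \<and> card (Bf (sc k) ys) = 1} = {ys \<in> arrangements k. \<exists>u\<in>{1..k-1}. Bf (sc k) ys = {u}}"
  proof (intro Collect_cong conj_cong refl)
    fix ys assume ys: "ys \<in> arrangements k"
    have sub: "Bf (sc k) ys \<subseteq> {1..k}" using Bf_arr_sub[OF ys] .
    show "(k \<notin> Bf (sc k) ys \<and> card (Bf (sc k) ys) = 1) = (\<exists>u\<in>{1..k-1}. Bf (sc k) ys = {u})"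
    proof
      assume a: "k \<notin> Bf (sc k) ys \<and> card (Bf (sc k) ys) = 1"
      then obtain u where u: "Bf (sc k) ys = {u}" by (auto simp: card_1_singleton_iff)
      then have "u \<in> {1..k}" "u \<noteq> k" using sub a by auto
      then have "u \<in> {1..k-1}" by (simp, linarith)
      then show "\<exists>u\<in>{1..k-1}. Bf (sc k) ys = {u}" using u by blast
    next
      assume "\<exists>u\<in>{1..k-1}. Bf (sc k) ys = {u}"
      then obtain u where "u \<in> {1..k-1}" "Bf (sc k) ys = {u}" by blast
      moreover then have "u \<noteq> k" using k by (simp, linarith)
      ultimately show "k \<notin> Bf (sc k) ys \<and> card (Bf (sc k) ys) = 1" by simp
    qed
  qed
  moreover have "{1..k-1} \<subseteq> {1..k}" by simp
  ultimately show ?thesis using card_union_A[OF k, of "{1..k-1}"] by simp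
qed




lemma last_notin_butlast: "distinct xs \<Longrightarrow> xs \<noteq> [] \<Longrightarrow> last xs \<notin> set (butlast xs)"
  by (metis append_butlast_last_id distinct_append disjoint_iff list.set_intros(1))

lemma good_ins:
  assumes ys: "ys \<in> arrangements m" and m: "m \<ge> 2" and e: "ys = as @ bs"
  shows "Bf (sc (Suc m)) (as @ Suc m # bs) = {} \<longleftrightarrow>
    (Bf (sc m) ys - {m} \<subseteq> (if as \<noteq> [] \<and> bs \<noteq> [] \<and> hd bs = sc m (last as) then {last as} else {})
     \<and> \<not> (as \<noteq> [] \<and> last as = m) \<and> \<not> (bs \<noteq> [] \<and> hd bs = 1))"
proof -
  let ?n = "Suc m"
  let ?J = "(if as \<noteq> [] \<and> bs \<noteq> [] \<and> hd bs = sc m (last as) then {last as} else {})"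
  have dy: "distinct ys" and sy: "set ys = {1..m}" using ys by (auto simp: arrangements_def)
  have sas: "set as \<subseteq> {1..m}" and sbs: "set bs \<subseteq> {1..m}" using sy e by auto
  have da: "distinct as" and disj: "set as \<inter> set bs = {}" using dy e by auto
  have B1: "Bf (sc ?n) (as @ ?n # bs) = Bf (sc ?n) as \<union> Bf (sc ?n) (?n # bs) \<union>
     (if as \<noteq> [] \<and> ?n = sc ?n (last as) then {last as} else {})"
    by (simp add: Bf_append)
  have B2: "Bf (sc ?n) (?n # bs) = Bf (sc ?n) bs \<union> (if bs \<noteq> [] \<and> hd bs = 1 then {?n} else {})"
    by (simp add: Bf_Cons sc_def)
  have L: "(as \<noteq> [] \<and> ?n = sc ?n (last as)) \<longleftrightarrow> (as \<noteq> [] \<and> last as = m)"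
  proof (cases "as = []")
    case False
    then have "last as \<in> {1..m}" using sas last_in_set by blast
    then show ?thesis using False by (auto simp: sc_def)
  qed simp
  have Sa: "Bf (sc ?n) as = Bf (sc m) as - {m}" by (rule Bf_shrink[OF sas])
  have Sb: "Bf (sc ?n) bs = Bf (sc m) bs - {m}" by (rule Bf_shrink[OF sbs])
  have Y: "Bf (sc m) ys = Bf (sc m) as \<union> Bf (sc m) bs \<union> ?J" unfolding e by (rule Bf_append)
  have dJa: "?J \<inter> Bf (sc m) as = {}"
  proof -
    have "as \<noteq> [] \<Longrightarrow> last as \<notin> Bf (sc m) as"
      using Bf_sub_tl[of "sc m" as] last_notin_butlast[OF da] by blast
    then show ?thesis by auto
  qed
  have dJb: "?J \<inter> Bf (sc m) bs = {}"
  proof -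
    have "as \<noteq> [] \<Longrightarrow> last as \<notin> Bf (sc m) bs"
      using Bf_sub[of "sc m" bs] disj last_in_set by blast
    then show ?thesis by auto
  qed
  have "(Bf (sc m) as - {m} = {} \<and> Bf (sc m) bs - {m} = {}) \<longleftrightarrow> Bf (sc m) ys - {m} \<subseteq> ?J"
    using Y dJa dJb by blast
  then show ?thesis unfolding B1 B2 L Sa Sb by auto
qed

lemma last_take_nth: "0 < k \<Longrightarrow> k \<le> length ys \<Longrightarrow> last (take k ys) = ys ! (k - 1)"
proof -
  assume a: "0 < k" "k \<le> length ys"
  then have ne: "take k ys \<noteq> []" by auto
  have "length (take k ys) = k" using a by simp
  then have "last (take k ys) = take k ys ! (k - 1)" using last_conv_nth[OF ne] by simp
  also have "\<dots> = ys ! (k - 1)" using a by (simp add: nth_take)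
  finally show ?thesis .
qed

definition insk :: "nat \<Rightarrow> nat \<Rightarrow> nat list \<Rightarrow> nat list" where
  "insk n k ys = take k ys @ n # drop k ys"

definition Phi :: "nat \<Rightarrow> nat list \<Rightarrow> nat \<Rightarrow> bool" where
  "Phi m ys k \<longleftrightarrow> (Bf (sc m) ys - {m} \<subseteq> (if 0 < k \<and> k < m \<and> ys ! k = sc m (ys ! (k - 1)) then {ys ! (k - 1)} else {}))
     \<and> \<not> (0 < k \<and> ys ! (k - 1) = m) \<and> \<not> (k < m \<and> ys ! k = 1)"

lemma good_ins_Phi:
  assumes ys: "ys \<in> arrangements m" and m: "m \<ge> 2" and k: "k \<le> m"
  shows "Bf (sc (Suc m)) (insk (Suc m) k ys) = {} \<longleftrightarrow> Phi m ys k"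
proof -
  have len: "length ys = m" using arr_len[OF ys] .
  have e: "ys = take k ys @ drop k ys" by simp
  have a1: "take k ys \<noteq> [] \<longleftrightarrow> 0 < k" using len k by auto
  have b1: "drop k ys \<noteq> [] \<longleftrightarrow> k < m" using len k by auto
  have a2: "0 < k \<Longrightarrow> last (take k ys) = ys ! (k - 1)" using last_take_nth[of k ys] len k by simp
  have b2: "k < m \<Longrightarrow> hd (drop k ys) = ys ! k" using hd_drop_conv_nth[of k ys] len by simp
  show ?thesis unfolding insk_def good_ins[OF ys m e] Phi_def
    using a1 b1 a2 b2 by (cases "0 < k"; cases "k < m") auto
qed




definition cK :: "nat \<Rightarrow> nat set \<Rightarrow> nat" where
  "cK m B = (if B - {m} = {} then (if m \<in> B then m else m - 1) else if card (B - {m}) = 1 then 1 else 0)"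

lemma Kcard:
  assumes ys: "ys \<in> arrangements m" and m: "m \<ge> 2"
  shows "card {k. k \<le> m \<and> Phi m ys k} = cK m (Bf (sc m) ys)"
proof -
  have len: "length ys = m" using arr_len[OF ys] .
  have dy: "distinct ys" and sy: "set ys = {1..m}" using ys by (auto simp: arrangements_def)
  have inj: "\<And>a b. a < m \<Longrightarrow> b < m \<Longrightarrow> ys ! a = ys ! b \<longleftrightarrow> a = b"
    using nth_eq_iff_index_eq[OF dy] len by simp
  have "m \<in> set ys" using sy m by simp
  then obtain i where i: "i < m" "ys ! i = m" using len by (auto simp: in_set_conv_nth)
  have "1 \<in> set ys" using sy m by simp
  then obtain j where j: "j < m" "ys ! j = 1" using len by (auto simp: in_set_conv_nth)
  have C2: "(0 < k \<and> ys ! (k - 1) = m) \<longleftrightarrow> k = Suc i" if "k \<le> m" for k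
  proof
    assume a: "0 < k \<and> ys ! (k - 1) = m"
    then have "k - 1 < m" using that by linarith
    then have "k - 1 = i" using inj[of "k - 1" i] a i by simp
    then show "k = Suc i" using a by linarith
  qed (use i in simp)
  have C3: "(k < m \<and> ys ! k = 1) \<longleftrightarrow> k = j" if "k \<le> m" for k
  proof
    assume a: "k < m \<and> ys ! k = 1"
    then show "k = j" using inj[of k j] j by simp
  qed (use j in simp)
  let ?B = "Bf (sc m) ys"
  have gen: "?B - {m} = {ys ! (k - 1)} \<and> 0 < k \<and> k < m \<and> ys ! k = sc m (ys ! (k - 1))"
    if "Phi m ys k" "?B - {m} \<noteq> {}" for k
  proof -
    have s: "?B - {m} \<subseteq> (if 0 < k \<and> k < m \<and> ys ! k = sc m (ys ! (k - 1)) then {ys ! (k - 1)} else {})"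
      using that(1) unfolding Phi_def by blast
    show ?thesis
    proof (cases "0 < k \<and> k < m \<and> ys ! k = sc m (ys ! (k - 1))")
      case True
      then show ?thesis using s that(2) by auto
    next
      case False
      then show ?thesis using s that(2) by auto
    qed
  qed
  show ?thesis
  proof (cases "?B - {m} = {}")
    case True
    have Keq: "{k. k \<le> m \<and> Phi m ys k} = {..m} - {Suc i, j}"
    proof (rule set_eqI)
      fix k
      show "k \<in> {k. k \<le> m \<and> Phi m ys k} \<longleftrightarrow> k \<in> {..m} - {Suc i, j}"
      proof (cases "k \<le> m")
        case True
        have "Phi m ys k \<longleftrightarrow> \<not> (0 < k \<and> ys ! (k - 1) = m) \<and> \<not> (k < m \<and> ys ! k = 1)"
          unfolding Phi_def by (simp only: \<open>?B - {m} = {}\<close> empty_subsetI simp_thms)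
        also have "\<dots> \<longleftrightarrow> k \<noteq> Suc i \<and> k \<noteq> j" by (simp only: C2[OF True] C3[OF True])
        finally show ?thesis using True by simp
      qed simp
    qed
    have sub: "{Suc i, j} \<subseteq> {..m}" using i j by auto
    have cardK: "card {k. k \<le> m \<and> Phi m ys k} = Suc m - card {Suc i, j}"
      unfolding Keq using card_Diff_subset[OF _ sub] by simp
    have mB: "m \<in> ?B \<longleftrightarrow> Suc i = j"
    proof
      assume "m \<in> ?B"
      then obtain t where t: "Suc t < length ys" "ys ! t = m" "ys ! Suc t = sc m m" by (auto simp: Bf_nth)
      have "t = i" using inj[of t i] t i len by simp
      moreover have "ys ! Suc t = 1" using t by (simp add: sc_def)
      ultimately show "Suc i = j" using inj[of "Suc t" j] t j len by simp
    next
      assume "Suc i = j"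
      then have "Suc i < length ys \<and> ys ! i = m \<and> ys ! Suc i = sc m m" using i j len by (simp add: sc_def)
      then show "m \<in> ?B" by (auto simp: Bf_nth)
    qed
    show ?thesis
    proof (cases "m \<in> ?B")
      case True
      then show ?thesis using cardK mB \<open>?B - {m} = {}\<close> by (simp add: cK_def)
    next
      case False
      then have "card {Suc i, j} = 2" using mB by simp
      then show ?thesis using cardK False \<open>?B - {m} = {}\<close> by (simp add: cK_def)
    qed
  next
    case False
    show ?thesis
    proof (cases "card (?B - {m}) = 1")
      case True
      then obtain u where u: "?B - {m} = {u}" by (auto simp: card_1_singleton_iff)
      then have "u \<in> ?B" "u \<noteq> m" by auto
      then obtain t where t: "Suc t < length ys" "ys ! t = u" "ys ! Suc t = sc m u" by (auto simp: Bf_nth)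
      have um: "u \<in> {1..m}" using Bf_arr_sub[OF ys] \<open>u \<in> ?B\<close> by blast
      have "{k. k \<le> m \<and> Phi m ys k} = {Suc t}"
      proof (rule set_eqI)
        fix k
        show "k \<in> {k. k \<le> m \<and> Phi m ys k} \<longleftrightarrow> k \<in> {Suc t}"
        proof
          assume "k \<in> {k. k \<le> m \<and> Phi m ys k}"
          then have k: "k \<le> m" "Phi m ys k" by auto
          have g: "?B - {m} = {ys ! (k - 1)}" "0 < k" "k < m" using gen[OF k(2) False] by auto
          then have "ys ! (k - 1) = ys ! t" using u t by simp
          then have "k - 1 = t" using inj[of "k - 1" t] g t len by simp
          then have "k = Suc t" using g by linarith
          then show "k \<in> {Suc t}" by simp
        next
          assume "k \<in> {Suc t}"
          then have k: "k = Suc t" by simp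
          have "sc m u \<noteq> 1" using sc_eq1[of u m] um \<open>u \<noteq> m\<close> by simp
          then have "Phi m ys (Suc t)" unfolding Phi_def using t u len \<open>u \<noteq> m\<close> by auto
          then show "k \<in> {k. k \<le> m \<and> Phi m ys k}" using k t len by simp
        qed
      qed
      then show ?thesis using True False by (simp add: cK_def)
    next
      case False2: False
      have "{k. k \<le> m \<and> Phi m ys k} = {}"
      proof (rule ccontr)
        assume "{k. k \<le> m \<and> Phi m ys k} \<noteq> {}"
        then obtain k where "Phi m ys k" by blast
        then have "?B - {m} = {ys ! (k - 1)}" using gen False by blast
        then show False using False2 by simp
      qed
      then show ?thesis using False False2 by (simp add: cK_def)
    qed
  qed
qed




lemma ins_count:
  assumes m: "m \<ge> 2"
  shows "G (Suc m) = (\<Sum>ys\<in>arrangements m. card {k. k \<le> m \<and> Phi m ys k})"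
proof -
  let ?n = "Suc m"
  let ?S = "SIGMA ys:arrangements m. {k. k \<le> m \<and> Phi m ys k}"
  let ?Good = "{xs \<in> arrangements ?n. Bf (sc ?n) xs = {}}"
  let ?f = "\<lambda>(ys, k). insk ?n k ys"
  have nys: "?n \<notin> set ys" if "ys \<in> arrangements m" for ys
    using that by (simp add: arrangements_def)
  have inj: "inj_on ?f ?S"
  proof (rule inj_onI)
    fix p q assume p: "p \<in> ?S" and q: "q \<in> ?S" and e: "?f p = ?f q"
    obtain ys k where pp: "p = (ys, k)" by (cases p)
    obtain ys' k' where qq: "q = (ys', k')" by (cases q)
    have ys: "ys \<in> arrangements m" "k \<le> m" using p pp by auto
    have ys': "ys' \<in> arrangements m" "k' \<le> m" using q qq by auto
    have n1: "?n \<notin> set (take k ys)" using nys[OF ys(1)] in_set_takeD by fastforce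
    have n2: "?n \<notin> set (drop k ys)" using nys[OF ys(1)] in_set_dropD by fastforce
    have "take k ys @ ?n # drop k ys = take k' ys' @ ?n # drop k' ys'"
      using e pp qq by (simp add: insk_def)
    then have t: "take k ys = take k' ys'" and d: "drop k ys = drop k' ys'"
      using append_Cons_eq_iff[OF n1 n2] by auto
    have "ys = ys'" using t d by (metis append_take_drop_id)
    moreover have "k = k'"
    proof -
      have "length (take k ys) = k" using ys arr_len by simp
      moreover have "length (take k' ys') = k'" using ys' arr_len by simp
      ultimately show ?thesis using t by simp
    qed
    ultimately show "p = q" using pp qq by simp
  qed
  have img: "?f ` ?S = ?Good"
  proof
    show "?f ` ?S \<subseteq> ?Good"
    proof (rule image_subsetI)
      fix p assume p: "p \<in> ?S"
      obtain ys k where pp: "p = (ys, k)" by (cases p)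
      have ys: "ys \<in> arrangements m" and k: "k \<le> m" and ph: "Phi m ys k" using p pp by auto
      have dy: "distinct ys" and sy: "set ys = {1..m}" using ys by (auto simp: arrangements_def)
      have "distinct (take k ys @ drop k ys)" using dy by simp
      then have d2: "distinct (take k ys) \<and> distinct (drop k ys) \<and> set (take k ys) \<inter> set (drop k ys) = {}"
        by (simp only: distinct_append)
      have "?n \<notin> set (take k ys)" "?n \<notin> set (drop k ys)"
        using nys[OF ys] by (auto dest: in_set_takeD in_set_dropD)
      then have "distinct (take k ys @ ?n # drop k ys)" using d2 by simp
      moreover have "set (take k ys @ ?n # drop k ys) = insert ?n (set ys)"
      proof -
        have "set (take k ys) \<union> set (drop k ys) = set ys" by (metis append_take_drop_id set_append)
        then show ?thesis by auto
      qed
      moreover have "insert ?n {1..m} = {1..?n}" by (simp add: atLeastAtMostSuc_conv)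
      ultimately have "insk ?n k ys \<in> arrangements ?n" using sy by (simp add: insk_def arrangements_def)
      moreover have "Bf (sc ?n) (insk ?n k ys) = {}" using good_ins_Phi[OF ys m k] ph by simp
      ultimately show "?f p \<in> ?Good" using pp by simp
    qed
    show "?Good \<subseteq> ?f ` ?S"
    proof
      fix xs assume xs: "xs \<in> ?Good"
      have dx: "distinct xs" and sx: "set xs = {1..?n}" using xs by (auto simp: arrangements_def)
      have "?n \<in> set xs" using sx by simp
      then obtain as bs where e: "xs = as @ ?n # bs" by (meson split_list)
      have na: "?n \<notin> set as" and nb: "?n \<notin> set bs" using dx e by auto
      define ys where "ys = as @ bs"
      have "distinct ys" using dx e ys_def by auto
      moreover have "set ys = set xs - {?n}" using e na nb ys_def by auto
      moreover have "{1..?n} - {?n} = {1..m}" by (simp add: atLeastAtMostSuc_conv)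
      ultimately have ys: "ys \<in> arrangements m" using sx by (simp add: arrangements_def)
      define k where "k = length as"
      have k: "k \<le> m" using arr_len[OF ys] ys_def k_def by simp
      have tk: "take k ys = as" "drop k ys = bs" using ys_def k_def by auto
      have ix: "insk ?n k ys = xs" using tk e by (simp add: insk_def)
      then have "Phi m ys k" using good_ins_Phi[OF ys m k] xs by simp
      then have "(ys, k) \<in> ?S" using ys k by simp
      then show "xs \<in> ?f ` ?S" using ix by (metis (no_types, lifting) case_prod_conv image_eqI)
    qed
  qed
  have "G ?n = card ?Good" by (simp add: G_def)
  also have "\<dots> = card ?S" using card_image[OF inj] img by simp
  also have "\<dots> = (\<Sum>ys\<in>arrangements m. card {k. k \<le> m \<and> Phi m ys k})"
    using finite_arr by (intro card_SigmaI) auto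
  finally show ?thesis .
qed




lemma sum_if_card: "finite A \<Longrightarrow> (\<Sum>x\<in>A. if P x then c else 0) = c * card {x\<in>A. P x}"
  by (simp add: sum.inter_filter[symmetric])

lemma cK_split: "cK m B = (if B = {} then m - 1 else 0) + (if B = {m} then m else 0) + (if card (B - {m}) = 1 then 1 else 0)"
proof (cases "B - {m} = {}")
  case True
  then have "B = {} \<or> B = {m}" by blast
  then show ?thesis using True by (auto simp: cK_def)
next
  case False
  then have "B \<noteq> {}" "B \<noteq> {m}" by auto
  then show ?thesis using False by (simp add: cK_def)
qed

lemma G_rec0:
  assumes m: "m \<ge> 2"
  shows "G (Suc m) = (m - 1) * G m + m * G (m - 1) + (m - 1) * G (m - 1)
           + card {zs \<in> arrangements (m - 1). card (Bf (sc (m - 1)) zs) = 1}"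
proof -
  let ?A = "arrangements m"
  let ?B = "\<lambda>ys. Bf (sc m) ys"
  have fA: "finite ?A" by (rule finite_arr)
  have "G (Suc m) = (\<Sum>ys\<in>?A. card {k. k \<le> m \<and> Phi m ys k})" by (rule ins_count[OF m])
  also have "\<dots> = (\<Sum>ys\<in>?A. cK m (?B ys))" using Kcard[OF _ m] by (intro sum.cong) auto
  also have "\<dots> = (\<Sum>ys\<in>?A. (if ?B ys = {} then m - 1 else 0)) + (\<Sum>ys\<in>?A. (if ?B ys = {m} then m else 0))
       + (\<Sum>ys\<in>?A. (if card (?B ys - {m}) = 1 then 1 else 0))"
    unfolding cK_split by (simp add: sum.distrib)
  also have "\<dots> = (m - 1) * card {ys\<in>?A. ?B ys = {}} + m * card {ys\<in>?A. ?B ys = {m}}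
       + card {ys\<in>?A. card (?B ys - {m}) = 1}"
    using sum_if_card[OF fA] by simp
  finally have e1: "G (Suc m) = (m - 1) * G m + m * G (m - 1) + card {ys\<in>?A. card (?B ys - {m}) = 1}"
    using cardAk[OF m] by (simp add: G_def)
  have split: "{ys\<in>?A. card (?B ys - {m}) = 1} =
     {ys\<in>?A. m \<notin> ?B ys \<and> card (?B ys) = 1} \<union> {ys\<in>?A. m \<in> ?B ys \<and> card (?B ys - {m}) = 1}"
    by auto
  have "card {ys\<in>?A. card (?B ys - {m}) = 1} =
     card {ys\<in>?A. m \<notin> ?B ys \<and> card (?B ys) = 1} + card {ys\<in>?A. m \<in> ?B ys \<and> card (?B ys - {m}) = 1}"
    unfolding split by (rule card_Un_disjoint) (use fA in auto)
  also have "\<dots> = (m - 1) * G (m - 1) + card {zs \<in> arrangements (m - 1). card (Bf (sc (m - 1)) zs) = 1}"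
    using card_one_nk[OF m] con[OF m, of "\<lambda>S. card S = 1"] by simp
  finally show ?thesis using e1 by simp
qed

lemma G_rec:
  assumes m: "m \<ge> 3"
  shows "G (Suc m) = (m - 1) * G m + m * G (m - 1) + (m - 1) * G (m - 1) + (m - 1) * G (m - 2)"
proof -
  have "m - 1 \<ge> 2" using m by simp
  from card_one[OF this] have "card {zs \<in> arrangements (m - 1). card (Bf (sc (m - 1)) zs) = 1} = (m - 1) * G (m - 2)"
    by (simp add: diff_diff_add numeral_2_eq_2)
  then show ?thesis using G_rec0[of m] m by simp
qed



lemma i2: "{1..2::nat} = {1,2}" by (simp add: atLeastAtMostSuc_conv numeral_2_eq_2 insert_commute)
lemma i1: "{1..1::nat} = {1}" by simp
lemma arr1: "arrangements 1 = {[1]}"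
proof
  show "arrangements 1 \<subseteq> {[1]}"
  proof
    fix xs assume xs: "xs \<in> arrangements 1"
    then have "length xs = 1" by (rule arr_len)
    then obtain a where e: "xs = [a]" by (metis One_nat_def length_0_conv length_Suc_conv)
    have "set xs = {1}" using xs i1 by (simp add: arrangements_def)
    then show "xs \<in> {[1]}" using e by simp
  qed
  show "{[1]} \<subseteq> arrangements 1" by (simp add: arrangements_def)
qed

lemma arr2: "arrangements 2 = {[1,2],[2,1]}"
proof
  show "arrangements 2 \<subseteq> {[1,2],[2,1]}"
  proof
    fix xs assume xs: "xs \<in> arrangements 2"
    then have "length xs = 2" by (rule arr_len)
    then obtain a b where e: "xs = [a, b]"
      by (metis (no_types) One_nat_def Suc_1 length_0_conv length_Suc_conv)
    have "set xs = {1,2}" using xs i2 by (simp add: arrangements_def)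
    then have "{a, b} = {1, 2::nat}" using e by simp
    then have "(a = 1 \<and> b = 2) \<or> (a = 2 \<and> b = 1)" by (simp only: doubleton_eq_iff)
    then show "xs \<in> {[1,2],[2,1]}" using e by auto
  qed
  show "{[1,2],[2,1]} \<subseteq> arrangements 2" using i2 by (auto simp: arrangements_def)
qed

lemma G1: "G 1 = 1"
proof -
  have "{zs \<in> {[1::nat]}. Bf (sc 1) zs = {}} = {[1]}" by auto
  then show ?thesis unfolding G_def arr1 by simp
qed

lemma G2: "G 2 = 0"
proof -
  have "Bf (sc 2) [1, 2] = {1}" "Bf (sc 2) [2, 1] = {2}" by (simp_all add: sc_def)
  then have "{zs \<in> {[1::nat, 2], [2, 1]}. Bf (sc 2) zs = {}} = {}" by auto
  then show ?thesis unfolding G_def arr2 by simp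
qed

lemma G3: "G 3 = 3"
proof -
  have "{zs \<in> {[1::nat]}. card (Bf (sc 1) zs) = 1} = {}" by auto
  then have "card {zs \<in> arrangements 1. card (Bf (sc 1) zs) = 1} = 0" unfolding arr1 by simp
  then show ?thesis using G_rec0[of 2] G1 G2 by (simp add: numeral_3_eq_3)
qed




lemma forb_iff:
  assumes n: "n \<ge> 1" and x: "x \<in> {1..n}"
  shows "(x, y) \<in> forbidden_patterns n \<longleftrightarrow> y = sc n x"
  using n x unfolding forbidden_patterns_def sc_def by auto

lemma D_G: assumes n: "n \<ge> 1" shows "D n = G n"
proof -
  have "{xs \<in> arrangements n. \<forall>(i, j)\<in>forbidden_patterns n. \<not> contains_pattern xs i j}
      = {xs \<in> arrangements n. Bf (sc n) xs = {}}"
  proof (intro Collect_cong conj_cong refl)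
    fix xs assume xs: "xs \<in> arrangements n"
    have sx: "set xs = {1..n}" using xs by (simp add: arrangements_def)
    have fp: "forbidden_patterns n \<subseteq> {1..n} \<times> UNIV"
      using n unfolding forbidden_patterns_def by auto
    show "(\<forall>(i, j)\<in>forbidden_patterns n. \<not> contains_pattern xs i j) = (Bf (sc n) xs = {})"
    proof
      assume a: "\<forall>(i, j)\<in>forbidden_patterns n. \<not> contains_pattern xs i j"
      show "Bf (sc n) xs = {}"
      proof (rule ccontr)
        assume "Bf (sc n) xs \<noteq> {}"
        then obtain x where "x \<in> Bf (sc n) xs" by blast
        then obtain t where t: "Suc t < length xs" "xs ! t = x" "xs ! Suc t = sc n x" by (auto simp: Bf_nth)
        have "x \<in> {1..n}" using t sx nth_mem by (metis Suc_lessD)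
        then have "(x, sc n x) \<in> forbidden_patterns n" using forb_iff[OF n] by blast
        moreover have "contains_pattern xs x (sc n x)" unfolding contains_pattern_def using t by blast
        ultimately show False using a by blast
      qed
    next
      assume b: "Bf (sc n) xs = {}"
      show "\<forall>(i, j)\<in>forbidden_patterns n. \<not> contains_pattern xs i j"
      proof (intro ballI, clarify)
        fix i j assume ij: "(i, j) \<in> forbidden_patterns n" and c: "contains_pattern xs i j"
        have "i \<in> {1..n}" using ij fp by blast
        then have "j = sc n i" using forb_iff[OF n] ij by blast
        then have "i \<in> Bf (sc n) xs" using c unfolding contains_pattern_def Bf_nth by blast
        then show False using b by blast
      qed
    qed
  qed
  then show ?thesis using n by (simp add: D_def G_def)
qed

lemma D_vals: "D 0 = 0" "D 1 = 1" "D 2 = 0" "D 3 = 3"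
  using D_G[of 1] D_G[of 2] D_G[of 3] G1 G2 G3 by (simp_all add: D_def)

lemma D_rec:
  assumes m: "m \<ge> 3"
  shows "D (Suc m) = (m - 1) * D m + m * D (m - 1) + (m - 1) * D (m - 1) + (m - 1) * D (m - 2)"
proof -
  have "D (Suc m) = G (Suc m)" by (rule D_G) simp
  moreover have "D m = G m" by (rule D_G) (use m in linarith)
  moreover have "D (m - 1) = G (m - 1)" by (rule D_G) (use m in linarith)
  moreover have "D (m - 2) = G (m - 2)" by (rule D_G) (use m in linarith)
  ultimately show ?thesis using G_rec[OF m] by simp
qed

theorem corollary3p3:
  fixes n :: nat
  assumes "n \<ge> 2"
  shows "int (D n) = int (n - 1) * (int (D (n - 1)) + int (D (n - 2))) + (-1) ^ (n - 1)"
  using assms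
proof (induction n rule: nat_induct_at_least)
  case base
  then show ?case using D_vals by simp
next
  case (Suc n)
  show ?case
  proof (cases "n = 2")
    case True
    then show ?thesis using D_vals by (simp add: numeral_3_eq_3 numeral_2_eq_2)
  next
    case False
    then have n3: "n \<ge> 3" using Suc.hyps by simp
    obtain p where p: "n = Suc (Suc (Suc p))" using n3
      by (metis Suc_le_D numeral_3_eq_3 Suc_le_mono)
    have R: "int (D (Suc n)) = int (n - 1) * int (D n) + int n * int (D (n - 1)) + int (n - 1) * int (D (n - 1)) + int (n - 1) * int (D (n - 2))"
      using D_rec[OF n3] by simp
    have IH: "int (D n) = int (n - 1) * (int (D (n - 1)) + int (D (n - 2))) + (-1) ^ (n - 1)"
      using Suc.IH .
    have s: "((-1::int) ^ (Suc n - 1)) = - ((-1) ^ (n - 1))" using p by simp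
    have "int (D (Suc n)) = int n * (int (D n) + int (D (n - 1))) + (-1) ^ (Suc n - 1)"
      unfolding s using R IH p by (simp add: algebra_simps)
    then show ?thesis by simp
  qed
qed


end
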